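(* Let $\alpha,\beta,\gamma\in I_{d,n}$, let $R_\alpha=\alpha\setminus\beta$, $S_\alpha=\beta\setminus\alpha$, $R_\gamma=\gamma\setminus\beta$, $S_\gamma=\beta\setminus\gamma$. For a finite multiset $U$ on $\overline\beta\times\beta$ let $x_U=\prod_{(i,j)\in U}x_{ij}$ (with multiplicity). Then $x_U$ does not lie in the ideal $\mathrm{in}\,G_{\alpha,\beta}^\gamma$ if and only if every chain $C$ contained in the underlying set of $U$ satisfies $$R_\alpha-S_\alpha\le C_{(1)}-C_{(2)}\le R_\gamma-S_\gamma .$$ Consequently, $U\mapsto x_U$ is a bijection from the degree-$m$ multisets on $\overline\beta\times\beta$ with this property onto the degree-$m$ monomials of $K[\mathcal{O}_\beta]$ not in $\mathrm{in}\,G_{\alpha,\beta}^\gamma$.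
   Context: $I_{d,n}$ = $d$-subsets of $\{1,\dots,n\}$, ordered by $\alpha\le\theta$ iff $\alpha_i\le\theta_i$ for all $i$ (entries sorted); $\overline\beta=\{1,\dots,n\}\setminus\beta$. $K[\mathcal{O}_\beta]=K[x_{ij}: i\in\overline\beta, j\in\beta]$ is the coordinate ring of the open cell $\{p_\beta\ne0\}$ of $Gr_{d,n}$, identified with $n\times d$ matrices having the identity in rows $\beta$ and free entries $x_{ij}$ in rows $\overline\beta$. $f_{\theta,\beta}=p_\theta/p_\beta$ is $\pm$ the minor of $(x_{ij})$ with rows $\theta\setminus\beta$ and columns $\beta\setminus\theta$. $G_{\alpha,\beta}^\gamma=\{f_{\theta,\beta}\mid\alpha\not\le\theta\text{ or }\theta\not\le\gamma\}$, and $\mathrm{in}\,G_{\alpha,\beta}^\gamma$ is the ideal generated by the initial terms, where the monomial order is chosen so that $\mathrm{in}(f_{\theta,\beta})=x_{r_1s_k}x_{r_2s_{k-1}}\cdots x_{r_ks_1}$ for $\theta\setminus\beta=\{r_1<\dots<r_k\}$, $\beta\setminus\theta=\{s_1<\dots<s_k\}$. A chain is a subset $\{(e_1,f_1),\dots,(e_m,f_m)\}$ ($m\ge0$) of $\mathbb{N}^2$ with $e_1<\dots<e_m$ and $f_1>\dots>f_m$; $C_{(1)},C_{(2)}$ are its sets of first and second coordinates. For finite multisets $A,B,C,D$ of integers with $|A|+|D|=|B|+|C|$, "$A-C\le B-D$" means $A\sqcup D\le B\sqcup C$ in the termwise order (the sorted entries compared pointwise). *)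

theory Defs
  imports Main "HOL-Library.Poly_Mapping" "HOL-Library.Multiset"
begin

definition Idn :: "nat \<Rightarrow> nat \<Rightarrow> nat set set" where
  "Idn d n = {A. A \<subseteq> {1..n} \<and> card A = d}"

definition termwise_le :: "int multiset \<Rightarrow> int multiset \<Rightarrow> bool" where
  "termwise_le A B \<longleftrightarrow> size A = size B \<and>
     (\<forall>i < size A. sorted_list_of_multiset A ! i \<le> sorted_list_of_multiset B ! i)"

definition Ile :: "nat set \<Rightarrow> nat set \<Rightarrow> bool" where
  "Ile A B \<longleftrightarrow> termwise_le (image_mset int (mset_set A)) (image_mset int (mset_set B))"

text \<open>"A - C \<le> B - D" means A + D \<le> B + C termwise (with |A|+|D| = |B|+|C|).\<close>
definition diff_le :: "int multiset \<Rightarrow> int multiset \<Rightarrow> int multiset \<Rightarrow> int multiset \<Rightarrow> bool" where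
  "diff_le A C B D \<longleftrightarrow> size A + size D = size B + size C \<and> termwise_le (A + D) (B + C)"

definition imset :: "nat set \<Rightarrow> int multiset" where
  "imset S = image_mset int (mset_set S)"

definition cbar :: "nat \<Rightarrow> nat set \<Rightarrow> nat set" where
  "cbar n B = {1..n} - B"

type_synonym 'k pol = "((nat \<times> nat) \<Rightarrow>\<^sub>0 nat) \<Rightarrow>\<^sub>0 'k"

definition var :: "nat \<times> nat \<Rightarrow> 'k::comm_ring_1 pol" where
  "var x = Poly_Mapping.single (Poly_Mapping.single x 1) 1"

definition xU :: "(nat \<times> nat) multiset \<Rightarrow> 'k::comm_ring_1 pol" where
  "xU U = prod_mset (image_mset var U)"

definition KO :: "nat \<Rightarrow> nat set \<Rightarrow> 'k::comm_ring_1 pol set" where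
  "KO n B = {p :: 'k pol. \<forall>t \<in> Poly_Mapping.keys p. Poly_Mapping.keys t \<subseteq> cbar n B \<times> B}"

definition ideal_gen_in :: "'k::comm_ring_1 pol set \<Rightarrow> 'k pol set \<Rightarrow> 'k pol set" where
  "ideal_gen_in R G = {p. \<exists>cs gs. length cs = length gs \<and> set cs \<subseteq> R \<and> set gs \<subseteq> G \<and>
      p = (\<Sum>(c, g) \<leftarrow> zip cs gs. c * g)}"

text \<open>Multiset of the initial term of f_{theta,beta}: for theta\beta = {r_1<..<r_k},
  beta\theta = {s_1<..<s_k}, in f = x_{r_1 s_k} x_{r_2 s_{k-1}} ... x_{r_k s_1}.\<close>
definition in_mset :: "nat set \<Rightarrow> nat set \<Rightarrow> (nat \<times> nat) multiset" where
  "in_mset \<theta> B = mset (zip (sorted_list_of_set (\<theta> - B)) (rev (sorted_list_of_set (B - \<theta>))))"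

definition in_f :: "nat set \<Rightarrow> nat set \<Rightarrow> 'k::comm_ring_1 pol" where
  "in_f \<theta> B = xU (in_mset \<theta> B)"

definition inG :: "nat \<Rightarrow> nat \<Rightarrow> nat set \<Rightarrow> nat set \<Rightarrow> nat set \<Rightarrow> 'k::comm_ring_1 pol set" where
  "inG d n \<alpha> B \<gamma> = ideal_gen_in (KO n B)
     {in_f \<theta> B | \<theta>. \<theta> \<in> Idn d n \<and> (\<not> Ile \<alpha> \<theta> \<or> \<not> Ile \<theta> \<gamma>)}"

definition is_chain :: "(nat \<times> nat) set \<Rightarrow> bool" where
  "is_chain C \<longleftrightarrow> (\<exists>ps. C = set ps \<and> sorted_wrt (\<lambda>p q. fst p < fst q \<and> snd p > snd q) ps)"

definition chain_ok :: "nat set \<Rightarrow> nat set \<Rightarrow> nat set \<Rightarrow> (nat \<times> nat) set \<Rightarrow> bool" where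
  "chain_ok \<alpha> B \<gamma> C \<longleftrightarrow>
     diff_le (imset (\<alpha> - B)) (imset (B - \<alpha>)) (imset (fst ` C)) (imset (snd ` C)) \<and>
     diff_le (imset (fst ` C)) (imset (snd ` C)) (imset (\<gamma> - B)) (imset (B - \<gamma>))"

definition good_mset :: "nat set \<Rightarrow> nat set \<Rightarrow> nat set \<Rightarrow> (nat \<times> nat) multiset \<Rightarrow> bool" where
  "good_mset \<alpha> B \<gamma> U \<longleftrightarrow> (\<forall>C. is_chain C \<and> C \<subseteq> set_mset U \<longrightarrow> chain_ok \<alpha> B \<gamma> C)"

definition monomials_deg :: "nat \<Rightarrow> nat set \<Rightarrow> nat \<Rightarrow> 'k::comm_ring_1 pol set" where
  "monomials_deg n B m = {Poly_Mapping.single t 1 | t :: (nat \<times> nat) \<Rightarrow>\<^sub>0 nat. Poly_Mapping.keys t \<subseteq> cbar n B \<times> B \<and>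
      (\<Sum>v \<in> Poly_Mapping.keys t. Poly_Mapping.lookup t v) = m}"

end

theory Submission imports Defs begin

definition pm :: "(nat \<times> nat) multiset \<Rightarrow> (nat \<times> nat) \<Rightarrow>\<^sub>0 nat" where
  "pm U = sum_mset (image_mset (\<lambda>x. Poly_Mapping.single x 1) U)"

lemma pm_plus: "pm (U + V) = pm U + pm V"
  by (simp add: pm_def)

lemma lookup_pm: "Poly_Mapping.lookup (pm U) x = count U x"
  by (induction U) (auto simp: pm_def lookup_add lookup_single when_def)

lemma keys_pm: "Poly_Mapping.keys (pm U) = set_mset U"
  by (auto simp: in_keys_iff lookup_pm)

lemma pm_inj: "pm U = pm V \<Longrightarrow> U = V"
  by (metis lookup_pm multiset_eqI)

definition mpm :: "((nat \<times> nat) \<Rightarrow>\<^sub>0 nat) \<Rightarrow> (nat \<times> nat) multiset" where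
  "mpm t = Abs_multiset (Poly_Mapping.lookup t)"

lemma count_mpm: "count (mpm t) = Poly_Mapping.lookup t"
proof -
  have "{x. 0 < Poly_Mapping.lookup t x} = Poly_Mapping.keys t" by (auto simp: in_keys_iff)
  then show ?thesis unfolding mpm_def by (subst count_Abs_multiset) auto
qed

lemma pm_mpm: "pm (mpm t) = t"
  by (rule poly_mapping_eqI) (simp add: lookup_pm count_mpm)

lemma xU_pm: "(xU U :: 'k::comm_ring_1 pol) = Poly_Mapping.single (pm U) 1"
proof (induction U)
  case empty
  then show ?case by (simp add: xU_def pm_def)
next
  case (add x U)
  have "(xU (add_mset x U) :: 'k pol) = var x * xU U" by (simp add: xU_def)
  also have "\<dots> = Poly_Mapping.single (pm (add_mset x U)) 1"
    using add by (simp add: var_def mult_single pm_def)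
  finally show ?case .
qed

lemma xU_plus: "(xU (U + V) :: 'k::comm_ring_1 pol) = xU U * xU V"
  by (simp add: xU_def)

lemma xU_inj: "(xU U :: 'k::field pol) = xU V \<Longrightarrow> U = V"
  by (metis xU_pm pm_inj lookup_single_eq one_neq_zero keys_single singletonD in_keys_iff)

lemma keys_sum_list:
  fixes xs :: "('k::comm_ring_1 pol \<times> 'k pol) list"
  assumes "\<forall>g\<in>G. \<exists>s. g = Poly_Mapping.single s 1" "snd ` set xs \<subseteq> G"
  shows "Poly_Mapping.keys (\<Sum>(c, g) \<leftarrow> xs. c * g) \<subseteq> {u + s | u s. Poly_Mapping.single s 1 \<in> G}"
  using assms(2)
proof (induction xs)
  case Nil
  then show ?case by simp
next
  case (Cons a xs)
  obtain c g where a: "a = (c, g)" by fastforce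
  with Cons have "g \<in> G" by auto
  then obtain s where s: "g = Poly_Mapping.single s 1" using assms(1) by blast
  have "Poly_Mapping.keys (c * g) \<subseteq> {u + s | u s. Poly_Mapping.single s 1 \<in> G}"
  proof
    fix w assume "w \<in> Poly_Mapping.keys (c * g)"
    then obtain u v where "w = u + v" "v \<in> Poly_Mapping.keys g" using keys_mult by blast
    then have "w = u + s" using s by (auto split: if_splits)
    then show "w \<in> {u + s | u s. Poly_Mapping.single s 1 \<in> G}" using \<open>g \<in> G\<close> s by blast
  qed
  moreover have "Poly_Mapping.keys (\<Sum>(c, g) \<leftarrow> xs. c * g) \<subseteq> {u + s | u s. Poly_Mapping.single s 1 \<in> G}"
    using Cons by auto
  ultimately show ?case using a keys_add by fastforce
qed

lemma mono_ideal:
  assumes G: "\<forall>g\<in>G. \<exists>V. g = xU V" and U: "set_mset U \<subseteq> cbar n B \<times> B"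
  shows "(xU U :: 'k::field pol) \<in> ideal_gen_in (KO n B) G \<longleftrightarrow> (\<exists>V. xU V \<in> G \<and> V \<subseteq># U)"
proof
  assume "(xU U :: 'k::field pol) \<in> ideal_gen_in (KO n B) G"
  then obtain cs gs where l: "length cs = length gs" "set gs \<subseteq> G"
     and p: "(xU U :: 'k pol) = (\<Sum>(c, g) \<leftarrow> zip cs gs. c * g)"
    unfolding ideal_gen_in_def by blast
  have G': "\<forall>g\<in>G. \<exists>s. g = Poly_Mapping.single s 1" using G by (metis xU_pm)
  have "snd ` set (zip cs gs) \<subseteq> G" using l by (metis set_map map_snd_zip)
  from keys_sum_list[OF G' this] p
  have "Poly_Mapping.keys (xU U :: 'k pol) \<subseteq> {u + s | u s. Poly_Mapping.single s 1 \<in> G}" by simp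
  moreover have "pm U \<in> Poly_Mapping.keys (xU U :: 'k pol)" by (simp add: xU_pm)
  ultimately have "pm U \<in> {u + s | u s. Poly_Mapping.single s 1 \<in> G}" by blast
  then obtain u s where us: "pm U = u + s" "Poly_Mapping.single s 1 \<in> G" by blast
  have "pm U = pm (mpm u + mpm s)" using us by (simp add: pm_plus pm_mpm)
  then have "U = mpm u + mpm s" by (rule pm_inj)
  moreover have "xU (mpm s) = (Poly_Mapping.single s 1 :: 'k pol)" by (simp add: xU_pm pm_mpm)
  ultimately show "\<exists>V. xU V \<in> G \<and> V \<subseteq># U" using us by (metis mset_subset_eq_add_right)
next
  assume "\<exists>V. xU V \<in> G \<and> V \<subseteq># U"
  then obtain V where V: "(xU V :: 'k pol) \<in> G" "V \<subseteq># U" by blast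
  have eq: "(xU U :: 'k pol) = xU (U - V) * xU V"
    using V(2) by (metis xU_plus subset_mset.diff_add)
  have "set_mset (U - V) \<subseteq> cbar n B \<times> B" using U by (meson in_diffD subset_iff)
  then have "(xU (U - V) :: 'k pol) \<in> KO n B"
    by (simp add: KO_def xU_pm keys_pm)
  then show "(xU U :: 'k::field pol) \<in> ideal_gen_in (KO n B) G"
    unfolding ideal_gen_in_def using V eq
    by (intro CollectI exI[of _ "[xU (U - V)]"] exI[of _ "[xU V]"]) simp
qed


lemma sorted_cmp:
  fixes xs ys :: "int list"
  assumes sx: "sorted xs" and sy: "sorted ys" and len: "length xs = length ys"
  shows "(\<forall>i<length xs. xs!i \<le> ys!i) \<longleftrightarrow>
         (\<forall>t. length (filter ((\<le>) t) xs) \<le> length (filter ((\<le>) t) ys))"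
proof
  assume H: "\<forall>i<length xs. xs!i \<le> ys!i"
  show "\<forall>t. length (filter ((\<le>) t) xs) \<le> length (filter ((\<le>) t) ys)"
  proof
    fix t
    have "{i. i < length xs \<and> t \<le> xs!i} \<subseteq> {i. i < length ys \<and> t \<le> ys!i}"
      using H len by force
    then show "length (filter ((\<le>) t) xs) \<le> length (filter ((\<le>) t) ys)"
      unfolding length_filter_conv_card by (intro card_mono) auto
  qed
next
  assume H: "\<forall>t. length (filter ((\<le>) t) xs) \<le> length (filter ((\<le>) t) ys)"
  show "\<forall>i<length xs. xs!i \<le> ys!i"
  proof (rule ccontr)
    assume "\<not> (\<forall>i<length xs. xs!i \<le> ys!i)"
    then obtain i where i: "i < length xs" "ys!i < xs!i" by force
    define t where "t = xs!i"
    have A: "{i..<length xs} \<subseteq> {j. j < length xs \<and> t \<le> xs!j}"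
      using sx unfolding t_def by (auto intro: sorted_nth_mono)
    have B: "{j. j < length ys \<and> t \<le> ys!j} \<subseteq> {Suc i..<length xs}"
    proof
      fix j assume j: "j \<in> {j. j < length ys \<and> t \<le> ys!j}"
      have "\<not> j \<le> i"
      proof
        assume "j \<le> i"
        then have "ys!j \<le> ys!i" using sy i len by (auto intro: sorted_nth_mono)
        then show False using j i t_def by auto
      qed
      then show "j \<in> {Suc i..<length xs}" using j len by auto
    qed
    have "length xs - i \<le> card {j. j < length xs \<and> t \<le> xs!j}"
      using card_mono[OF _ A] by simp
    moreover have "card {j. j < length ys \<and> t \<le> ys!j} \<le> length xs - Suc i"
      using card_mono[OF _ B] by simp
    moreover have "card {j. j < length xs \<and> t \<le> xs!j} \<le> card {j. j < length ys \<and> t \<le> ys!j}"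
      using H[rule_format, of t] unfolding length_filter_conv_card .
    ultimately show False using i by linarith
  qed
qed

lemma size_filter_sorted:
  "size (filter_mset P X) = length (filter P (sorted_list_of_multiset X))"
  by (metis mset_filter mset_sorted_list_of_multiset size_mset)

lemma termwise_le_iff:
  "termwise_le X Y \<longleftrightarrow> size X = size Y \<and>
     (\<forall>t. size (filter_mset ((\<le>) t) X) \<le> size (filter_mset ((\<le>) t) Y))"
proof -
  have l: "length (sorted_list_of_multiset X) = size X" "length (sorted_list_of_multiset Y) = size Y"
    by (metis mset_sorted_list_of_multiset size_mset)+
  show ?thesis
    unfolding termwise_le_def size_filter_sorted
    using sorted_cmp[of "sorted_list_of_multiset X" "sorted_list_of_multiset Y"] l
    by auto
qed

definition cg :: "int \<Rightarrow> nat set \<Rightarrow> nat" where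
  "cg t S = card {x\<in>S. t \<le> int x}"

lemma size_filter_imset:
  "finite S \<Longrightarrow> size (filter_mset ((\<le>) t) (imset S)) = cg t S"
  by (simp add: imset_def filter_mset_image_mset cg_def)

lemma size_imset: "finite S \<Longrightarrow> size (imset S) = card S"
  by (simp add: imset_def)

lemma cg_split: "finite S \<Longrightarrow> cg t S = cg t (S - B) + cg t (S \<inter> B)"
  unfolding cg_def
  by (subst card_Un_disjoint[symmetric]) (auto intro: arg_cong[where f=card])

lemma Ile_iff: "finite A \<Longrightarrow> finite T \<Longrightarrow>
   Ile A T \<longleftrightarrow> card A = card T \<and> (\<forall>t. cg t A \<le> cg t T)"
  unfolding Ile_def termwise_le_iff
  using size_filter_imset[unfolded imset_def] size_imset[unfolded imset_def]
  by simp

lemma card_diff_eq: "finite A \<Longrightarrow> finite B \<Longrightarrow> card A = card B \<Longrightarrow> card (A - B) = card (B - A)"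
  by (metis card_Diff_subset_Int Int_commute finite_Int inf_le1 card_Diff_subset inf_le2)

lemma Ile_diff:
  assumes fin: "finite A" "finite B" "finite T" and c: "card A = card B" "card T = card B"
  shows "Ile A T \<longleftrightarrow> diff_le (imset (A - B)) (imset (B - A)) (imset (T - B)) (imset (B - T))"
proof -
  have s: "size (imset (A - B)) + size (imset (B - T)) = size (imset (T - B)) + size (imset (B - A))"
    using fin c card_diff_eq[of A B] card_diff_eq[of T B] by (simp add: size_imset)
  have "(\<forall>t. cg t A \<le> cg t T) \<longleftrightarrow> (\<forall>t. cg t (A - B) + cg t (B - T) \<le> cg t (T - B) + cg t (B - A))"
  proof -
    have "cg t A \<le> cg t T \<longleftrightarrow> cg t (A - B) + cg t (B - T) \<le> cg t (T - B) + cg t (B - A)" for t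
    proof -
      have 1: "cg t A = cg t (A - B) + cg t (A \<inter> B)" using fin by (intro cg_split)
      have 2: "cg t T = cg t (T - B) + cg t (T \<inter> B)" using fin by (intro cg_split)
      have 3: "cg t B = cg t (B - A) + cg t (A \<inter> B)" using fin cg_split[of B t A] by (simp add: Int_commute)
      have 4: "cg t B = cg t (B - T) + cg t (T \<inter> B)" using fin cg_split[of B t T] by (simp add: Int_commute)
      show ?thesis using 1 2 3 4 by linarith
    qed
    then show ?thesis by blast
  qed
  then show ?thesis
    unfolding diff_le_def termwise_le_iff Ile_iff[OF fin(1) fin(3)]
    using s fin c by (simp add: size_filter_imset filter_union_mset size_imset)
qed


lemma sorted_wrt_zip:
  assumes "sorted_wrt P xs" "sorted_wrt Q ys" "length xs = length ys"
  shows "sorted_wrt (\<lambda>p q. P (fst p) (fst q) \<and> Q (snd p) (snd q)) (zip xs ys)"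
  using assms unfolding sorted_wrt_iff_nth_less by auto

lemma in_mset_props:
  assumes "finite \<theta>" "finite B" "card \<theta> = card B"
  defines "C \<equiv> set_mset (in_mset \<theta> B)"
  shows "is_chain C" "fst ` C = \<theta> - B" "snd ` C = B - \<theta>" "in_mset \<theta> B = mset_set C"
proof -
  define xs where "xs = sorted_list_of_set (\<theta> - B)"
  define ys where "ys = rev (sorted_list_of_set (B - \<theta>))"
  have cd: "card (\<theta> - B) = card (B - \<theta>)"
    using assms by (metis card_Diff_subset_Int Int_commute finite_Int inf_le1 card_Diff_subset inf_le2)
  have len: "length xs = length ys" unfolding xs_def ys_def using cd by simp
  have C: "C = set (zip xs ys)" unfolding C_def in_mset_def xs_def ys_def by simp
  have sx: "sorted_wrt (<) xs" unfolding xs_def by simp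
  have sy: "sorted_wrt (>) ys" unfolding ys_def by (simp add: sorted_wrt_rev)
  show "is_chain C" unfolding is_chain_def C
    using sorted_wrt_zip[OF sx sy len] by blast
  show "fst ` C = \<theta> - B" unfolding C using len assms
    by (metis set_map map_fst_zip xs_def set_sorted_list_of_set finite_Diff)
  show "snd ` C = B - \<theta>" unfolding C using len assms
    by (metis set_map map_snd_zip ys_def set_rev set_sorted_list_of_set finite_Diff)
  have "distinct (zip xs ys)" using sx by (simp add: distinct_zipI1 strict_sorted_iff)
  then show "in_mset \<theta> B = mset_set C" unfolding C
    by (simp add: mset_set_set in_mset_def xs_def ys_def)
qed

lemma chain_theta:
  assumes ch: "is_chain C" and sub: "C \<subseteq> cbar n B \<times> B" and B: "B \<in> Idn d n"
  defines "\<theta> \<equiv> (B - snd ` C) \<union> fst ` C"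
  shows "\<theta> \<in> Idn d n" "\<theta> - B = fst ` C" "B - \<theta> = snd ` C" "in_mset \<theta> B = mset_set C"
proof -
  obtain ps where ps: "C = set ps" "sorted_wrt (\<lambda>p q. fst p < fst q \<and> snd p > snd q) ps"
    using ch unfolding is_chain_def by blast
  have sx: "sorted_wrt (<) (map fst ps)" using ps(2) by (auto simp: sorted_wrt_map elim: sorted_wrt_mono_rel[rotated])
  have sy: "sorted_wrt (>) (map snd ps)" using ps(2) by (auto simp: sorted_wrt_map elim: sorted_wrt_mono_rel[rotated])
  have dps: "distinct ps" using sx by (metis distinct_map strict_sorted_iff)
  have dx: "distinct (map fst ps)" using sx by (simp add: strict_sorted_iff)
  have dy: "distinct (map snd ps)" using sy
    by (metis distinct_rev sorted_wrt_rev strict_sorted_iff)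
  have cx: "card (fst ` C) = length ps" using dx ps(1) by (metis distinct_card length_map set_map)
  have cy: "card (snd ` C) = length ps" using dy ps(1) by (metis distinct_card length_map set_map)
  have fB: "fst ` C \<inter> B = {}" using sub by (auto simp: cbar_def)
  have sB: "snd ` C \<subseteq> B" using sub by auto
  have Bn: "B \<subseteq> {1..n}" "card B = d" using B by (auto simp: Idn_def)
  have finB: "finite B" using Bn finite_subset by blast
  have fn: "fst ` C \<subseteq> {1..n}" using sub by (auto simp: cbar_def)
  show t1: "\<theta> - B = fst ` C" unfolding \<theta>_def using fB by auto
  show t2: "B - \<theta> = snd ` C" unfolding \<theta>_def using fB sB by auto
  have "card \<theta> = card (B - snd ` C) + card (fst ` C)"
    unfolding \<theta>_def using fB finB ps(1) by (intro card_Un_disjoint) auto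
  also have "\<dots> = d" using card_Diff_subset[OF finite_subset[OF sB finB] sB] Bn cx cy
    card_mono[OF finB sB] by simp
  finally show "\<theta> \<in> Idn d n" unfolding Idn_def \<theta>_def using Bn fn by auto
  have e1: "sorted_list_of_set (\<theta> - B) = map fst ps"
    unfolding t1 using sx dx ps(1) by (metis sorted_list_of_set_unique List.finite_set distinct_card set_map length_map)
  have e2: "rev (sorted_list_of_set (B - \<theta>)) = map snd ps"
  proof -
    have "sorted_wrt (<) (rev (map snd ps))" using sy by (simp add: sorted_wrt_rev)
    then have "sorted_list_of_set (snd ` C) = rev (map snd ps)"
      using dy ps(1) by (metis sorted_list_of_set_unique List.finite_set distinct_card set_map length_map set_rev length_rev)
    then show ?thesis unfolding t2 by simp
  qed
  show "in_mset \<theta> B = mset_set C"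
    unfolding in_mset_def e1 e2 zip_map_fst_snd using dps ps(1) by (simp add: mset_set_set)
qed

lemma ok_iff:
  assumes "\<alpha> \<in> Idn d n" "B \<in> Idn d n" "\<gamma> \<in> Idn d n" "\<theta> \<in> Idn d n"
    and "fst ` C = \<theta> - B" "snd ` C = B - \<theta>"
  shows "chain_ok \<alpha> B \<gamma> C \<longleftrightarrow> Ile \<alpha> \<theta> \<and> Ile \<theta> \<gamma>"
proof -
  have f: "finite S" "card S = d" if "S \<in> Idn d n" for S
    using that by (auto simp: Idn_def intro: finite_subset)
  show ?thesis unfolding chain_ok_def assms(5,6)
    using Ile_diff[of \<alpha> B \<theta>] Ile_diff[of \<theta> B \<gamma>] f[OF assms(1)] f[OF assms(2)] f[OF assms(3)] f[OF assms(4)]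
    by simp
qed

lemma part1:
  fixes \<alpha> \<beta> \<gamma> :: "nat set" and d n :: nat
  assumes a: "\<alpha> \<in> Idn d n" and b: "\<beta> \<in> Idn d n" and c: "\<gamma> \<in> Idn d n"
    and U: "set_mset U \<subseteq> cbar n \<beta> \<times> \<beta>"
  shows "(xU U :: 'k::field pol) \<notin> inG d n \<alpha> \<beta> \<gamma> \<longleftrightarrow> good_mset \<alpha> \<beta> \<gamma> U"
proof -
  let ?G = "{in_f \<theta> \<beta> | \<theta>. \<theta> \<in> Idn d n \<and> (\<not> Ile \<alpha> \<theta> \<or> \<not> Ile \<theta> \<gamma>)} :: 'k pol set"
  have G: "\<forall>g\<in>?G. \<exists>V. g = xU V" by (auto simp: in_f_def)
  have fI: "finite S" "card S = d" if "S \<in> Idn d n" for S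
    using that by (auto simp: Idn_def intro: finite_subset)
  have "(xU U :: 'k pol) \<in> inG d n \<alpha> \<beta> \<gamma> \<longleftrightarrow> (\<exists>V. xU V \<in> ?G \<and> V \<subseteq># U)"
    unfolding inG_def by (rule mono_ideal[OF G U])
  also have "\<dots> \<longleftrightarrow> (\<exists>\<theta>. \<theta> \<in> Idn d n \<and> (\<not> Ile \<alpha> \<theta> \<or> \<not> Ile \<theta> \<gamma>) \<and> in_mset \<theta> \<beta> \<subseteq># U)"
    by (auto simp: in_f_def dest: xU_inj)
  also have "\<dots> \<longleftrightarrow> \<not> good_mset \<alpha> \<beta> \<gamma> U"
  proof
    assume "\<exists>\<theta>. \<theta> \<in> Idn d n \<and> (\<not> Ile \<alpha> \<theta> \<or> \<not> Ile \<theta> \<gamma>) \<and> in_mset \<theta> \<beta> \<subseteq># U"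
    then obtain \<theta> where th: "\<theta> \<in> Idn d n" "\<not> Ile \<alpha> \<theta> \<or> \<not> Ile \<theta> \<gamma>" "in_mset \<theta> \<beta> \<subseteq># U" by blast
    define C where "C = set_mset (in_mset \<theta> \<beta>)"
    have cc: "finite \<theta>" "finite \<beta>" "card \<theta> = card \<beta>" using fI th(1) b by auto
    note P = in_mset_props[OF cc, folded C_def]
    have "\<not> chain_ok \<alpha> \<beta> \<gamma> C" using ok_iff[OF a b c th(1) P(2) P(3)] th(2) by blast
    moreover have "C \<subseteq> set_mset U" unfolding C_def using th(3) by (rule set_mset_mono)
    ultimately show "\<not> good_mset \<alpha> \<beta> \<gamma> U" using P(1) unfolding good_mset_def by blast
  next
    assume "\<not> good_mset \<alpha> \<beta> \<gamma> U"
    then obtain C where C: "is_chain C" "C \<subseteq> set_mset U" "\<not> chain_ok \<alpha> \<beta> \<gamma> C"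
      unfolding good_mset_def by blast
    have sub: "C \<subseteq> cbar n \<beta> \<times> \<beta>" using C(2) U by blast
    define \<theta> where "\<theta> = (\<beta> - snd ` C) \<union> fst ` C"
    note T = chain_theta[OF C(1) sub b, folded \<theta>_def]
    have "\<not> Ile \<alpha> \<theta> \<or> \<not> Ile \<theta> \<gamma>" using ok_iff[OF a b c T(1) T(2)[symmetric] T(3)[symmetric]] C(3) by blast
    moreover have "in_mset \<theta> \<beta> \<subseteq># U"
    proof -
      have "mset_set C \<subseteq># mset_set (set_mset U)" using C(2) by (simp add: subset_imp_msubset_mset_set)
      also have "\<dots> \<subseteq># U" by (rule mset_set_set_mset_msubset)
      finally show ?thesis using T(4) by simp
    qed
    ultimately show "\<exists>\<theta>. \<theta> \<in> Idn d n \<and> (\<not> Ile \<alpha> \<theta> \<or> \<not> Ile \<theta> \<gamma>) \<and> in_mset \<theta> \<beta> \<subseteq># U"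
      using T(1) by blast
  qed
  finally show ?thesis by blast
qed

theorem lemma8p3:
  fixes \<alpha> \<beta> \<gamma> :: "nat set" and d n :: nat
  assumes "\<alpha> \<in> Idn d n" and "\<beta> \<in> Idn d n" and "\<gamma> \<in> Idn d n"
  shows "(\<forall>U. set_mset U \<subseteq> cbar n \<beta> \<times> \<beta> \<longrightarrow>
           ((xU U :: 'k::field pol) \<notin> inG d n \<alpha> \<beta> \<gamma> \<longleftrightarrow> good_mset \<alpha> \<beta> \<gamma> U)) \<and>
         (\<forall>m. bij_betw (xU :: (nat \<times> nat) multiset \<Rightarrow> 'k::field pol)
           {U. set_mset U \<subseteq> cbar n \<beta> \<times> \<beta> \<and> size U = m \<and> good_mset \<alpha> \<beta> \<gamma> U}
           (monomials_deg n \<beta> m - inG d n \<alpha> \<beta> \<gamma>))"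
proof (intro conjI allI impI)
  fix U :: "(nat \<times> nat) multiset"
  assume "set_mset U \<subseteq> cbar n \<beta> \<times> \<beta>"
  then show "((xU U :: 'k::field pol) \<notin> inG d n \<alpha> \<beta> \<gamma> \<longleftrightarrow> good_mset \<alpha> \<beta> \<gamma> U)"
    using part1[OF assms] by blast
next
  fix m
  have sz: "(\<Sum>v \<in> Poly_Mapping.keys (pm U). Poly_Mapping.lookup (pm U) v) = size U" for U
    by (simp add: keys_pm lookup_pm size_multiset_overloaded_eq)
  show "bij_betw (xU :: (nat \<times> nat) multiset \<Rightarrow> 'k::field pol)
           {U. set_mset U \<subseteq> cbar n \<beta> \<times> \<beta> \<and> size U = m \<and> good_mset \<alpha> \<beta> \<gamma> U}
           (monomials_deg n \<beta> m - inG d n \<alpha> \<beta> \<gamma>)"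
  proof (rule bij_betw_imageI)
    show "inj_on (xU :: (nat \<times> nat) multiset \<Rightarrow> 'k::field pol)
           {U. set_mset U \<subseteq> cbar n \<beta> \<times> \<beta> \<and> size U = m \<and> good_mset \<alpha> \<beta> \<gamma> U}"
      by (auto intro: inj_onI dest: xU_inj)
    show "(xU :: (nat \<times> nat) multiset \<Rightarrow> 'k::field pol) `
           {U. set_mset U \<subseteq> cbar n \<beta> \<times> \<beta> \<and> size U = m \<and> good_mset \<alpha> \<beta> \<gamma> U} =
           (monomials_deg n \<beta> m - inG d n \<alpha> \<beta> \<gamma>)"
    proof
      show "(xU :: (nat \<times> nat) multiset \<Rightarrow> 'k::field pol) `
           {U. set_mset U \<subseteq> cbar n \<beta> \<times> \<beta> \<and> size U = m \<and> good_mset \<alpha> \<beta> \<gamma> U} \<subseteq>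
           (monomials_deg n \<beta> m - inG d n \<alpha> \<beta> \<gamma>)"
      proof
        fix p :: "'k pol"
        assume "p \<in> xU ` {U. set_mset U \<subseteq> cbar n \<beta> \<times> \<beta> \<and> size U = m \<and> good_mset \<alpha> \<beta> \<gamma> U}"
        then obtain U where U: "p = xU U" "set_mset U \<subseteq> cbar n \<beta> \<times> \<beta>" "size U = m" "good_mset \<alpha> \<beta> \<gamma> U"
          by blast
        have "p \<notin> inG d n \<alpha> \<beta> \<gamma>" using part1[OF assms U(2)] U by blast
        moreover have "p \<in> monomials_deg n \<beta> m"
          unfolding monomials_deg_def using U sz[of U]
          by (intro CollectI exI[of _ "pm U"]) (simp add: xU_pm keys_pm)
        ultimately show "p \<in> monomials_deg n \<beta> m - inG d n \<alpha> \<beta> \<gamma>" by blast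
      qed
    next
      show "monomials_deg n \<beta> m - inG d n \<alpha> \<beta> \<gamma> \<subseteq> (xU :: (nat \<times> nat) multiset \<Rightarrow> 'k::field pol) `
           {U. set_mset U \<subseteq> cbar n \<beta> \<times> \<beta> \<and> size U = m \<and> good_mset \<alpha> \<beta> \<gamma> U}"
      proof
        fix p :: "'k pol"
        assume p: "p \<in> monomials_deg n \<beta> m - inG d n \<alpha> \<beta> \<gamma>"
        then obtain t where t: "p = Poly_Mapping.single t 1" "Poly_Mapping.keys t \<subseteq> cbar n \<beta> \<times> \<beta>"
          "(\<Sum>v \<in> Poly_Mapping.keys t. Poly_Mapping.lookup t v) = m"
          unfolding monomials_deg_def by blast
        define U where "U = mpm t"
        have pU: "pm U = t" unfolding U_def by (rule pm_mpm)
        have xp: "xU U = p" using t(1) pU by (simp add: xU_pm)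
        have sU: "set_mset U \<subseteq> cbar n \<beta> \<times> \<beta>" using t(2) pU keys_pm by metis
        have szU: "size U = m" using sz[of U] t(3) pU by simp
        have "good_mset \<alpha> \<beta> \<gamma> U" using part1[OF assms sU] p xp by blast
        then show "p \<in> xU ` {U. set_mset U \<subseteq> cbar n \<beta> \<times> \<beta> \<and> size U = m \<and> good_mset \<alpha> \<beta> \<gamma> U}"
          using xp sU szU by blast
      qed
    qed
  qed
qed

end
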